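(* Let $\beta>0$, $\sigma^2>0$ and $snr=\sigma^{-2}$. Let $P_X$ be a distribution on a constellation $\mathcal{S}\subset\mathbb{C}$ with finite second moment, and let $\omega_{\mathcal S}(\rho)$ be its scalar MMSE function (defined below). Define $\phi(v)=(\beta v+\sigma^2)^{-1}$ for $v\ge 0$, whose inverse is $\phi^{-1}(\rho)=\beta^{-1}(1/\rho-\sigma^2)$ for $0<\rho\le snr$. Assume (single fixed point) that the equation $\omega_{\mathcal S}(\rho)=\phi^{-1}(\rho)$ has exactly one solution $\rho^*>0$; equivalently, with $\zeta^*=snr/\rho^*-1$, $\zeta^*$ is the unique positive solution of $\zeta=\beta\cdot snr\cdot\omega_{\mathcal S}\big(snr/(1+\zeta)\big)$. Let $$C=\beta^{-1}\Big[\log(1+\zeta^* )-\frac{\zeta^*}{1+\zeta^*}\Big]+C_{\rm SISO}\Big(\frac{snr}{1+\zeta^*}\Big),$$ which is the constrained capacity (per signal dimension) of the large random matrix system described below. Define $\omega^*_{\mathcal C}(\rho)=\min\{\omega_{\mathcal S}(\rho),\phi^{-1}(\rho)\}$ for $0<\rho\le snr$. Then $$C=A_{\omega^*_{\mathcal C}}:=\int_0^{snr}\omega^*_{\mathcal C}(\rho)\,d\rho=\beta^{-1}\Big[\frac{\rho^*}{snr}-\log\frac{\rho^*}{snr}-1\Big]+\int_0^{\rho^*}\omega_{\mathcal S}(\rho)\,d\rho .$$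
   Context: Scalar channel: $y=\sqrt{\rho}\,x+z$ with $z\sim\mathcal{CN}(0,1)$ independent of $x\sim P_X$; $\omega_{\mathcal S}(\rho)=\mathrm{mmse}(x\mid \sqrt{\rho}x+z)=\mathrm{E}|x-\mathrm{E}[x\mid y]|^2$, a continuous nonincreasing function of $\rho\ge0$. $C_{\rm SISO}(\rho^* )=I(x;\sqrt{\rho^*}x+z)=\int_0^{\rho^*}\omega_{\mathcal S}(\rho)\,d\rho$ (I-MMSE relation). The large random matrix system is $\mathbf y=\mathbf A\mathbf x+\mathbf n$ with $\mathbf A\in\mathbb C^{M\times N}$ having IID $\mathcal{CN}(0,1/M)$ entries, $\mathbf x$ having IID entries $\sim P_X$, $\mathbf n\sim\mathcal{CN}(0,\sigma^2 I_M)$, in the limit $M,N\to\infty$ with $\beta=N/M$ fixed; $snr=\sigma^{-2}$. *)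

theory Defs
  imports "HOL-Analysis.Analysis"
begin

text \<open>Inverse of phi(v) = 1/(beta v + sigma^2), for 0 < rho <= snr.\<close>
definition phi_inv :: "real \<Rightarrow> real \<Rightarrow> real \<Rightarrow> real" where
  "phi_inv \<beta> \<sigma>2 \<rho> = (1 / \<rho> - \<sigma>2) / \<beta>"

text \<open>Scalar constrained capacity via the I-MMSE relation: C_SISO(r) = int_0^r omega.\<close>
definition C_SISO :: "(real \<Rightarrow> real) \<Rightarrow> real \<Rightarrow> real" where
  "C_SISO \<omega> r = integral {0..r} \<omega>"

definition omega_C :: "(real \<Rightarrow> real) \<Rightarrow> real \<Rightarrow> real \<Rightarrow> real \<Rightarrow> real" where
  "omega_C \<omega> \<beta> \<sigma>2 \<rho> = min (\<omega> \<rho>) (phi_inv \<beta> \<sigma>2 \<rho>)"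

end

theory Submission
  imports Defs
begin

lemma phi_cont:
  assumes "0 < a" "\<beta> > 0"
  shows "continuous_on {a..b} (phi_inv \<beta> \<sigma>2)"
  unfolding phi_inv_def using assms
  by (intro continuous_intros) auto

theorem proposition1:
  fixes \<beta> \<sigma>2 snr \<rho>s \<zeta>s :: real and \<omega> :: "real \<Rightarrow> real"
  assumes beta_pos: "\<beta> > 0"
    and sigma_pos: "\<sigma>2 > 0"
    and snr_def: "snr = 1 / \<sigma>2"
    and omega_cont: "continuous_on {0..} \<omega>"
    and omega_mono: "\<And>a b. 0 \<le> a \<Longrightarrow> a \<le> b \<Longrightarrow> \<omega> b \<le> \<omega> a"
    and omega_nonneg: "\<And>\<rho>. 0 \<le> \<rho> \<Longrightarrow> 0 \<le> \<omega> \<rho>"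
    and rho_range: "0 < \<rho>s" "\<rho>s \<le> snr"
    and rho_fix: "\<omega> \<rho>s = phi_inv \<beta> \<sigma>2 \<rho>s"
    and rho_unique: "\<And>\<rho>. 0 < \<rho> \<Longrightarrow> \<rho> \<le> snr \<Longrightarrow> \<omega> \<rho> = phi_inv \<beta> \<sigma>2 \<rho> \<Longrightarrow> \<rho> = \<rho>s"
    and zeta_def: "\<zeta>s = snr / \<rho>s - 1"
  shows "omega_C \<omega> \<beta> \<sigma>2 integrable_on {0..snr}
     \<and> (1 / \<beta>) * (ln (1 + \<zeta>s) - \<zeta>s / (1 + \<zeta>s)) + C_SISO \<omega> (snr / (1 + \<zeta>s))
         = integral {0..snr} (omega_C \<omega> \<beta> \<sigma>2)
     \<and> integral {0..snr} (omega_C \<omega> \<beta> \<sigma>2)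
         = (1 / \<beta>) * (\<rho>s / snr - ln (\<rho>s / snr) - 1) + integral {0..\<rho>s} \<omega>"
proof -
  define g where "g x = \<omega> x - phi_inv \<beta> \<sigma>2 x" for x
  have gcont: "continuous_on {a..b} g" if "0 < a" for a b
    unfolding g_def
    by (intro continuous_on_diff phi_cont that beta_pos continuous_on_subset[OF omega_cont]) (use that in auto)
  have snrpos: "snr > 0" using snr_def sigma_pos by simp
  have phisnr: "phi_inv \<beta> \<sigma>2 snr = 0" using snr_def sigma_pos by (simp add: phi_inv_def)
  have A: "\<omega> \<rho> \<le> phi_inv \<beta> \<sigma>2 \<rho>" if r: "0 < \<rho>" "\<rho> \<le> \<rho>s" for \<rho>
  proof (rule ccontr)
    assume neg: "\<not> ?thesis"
    hence "\<rho> \<noteq> \<rho>s" using rho_fix by auto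
    hence r2: "\<rho> < \<rho>s" using r by auto
    define \<epsilon> where "\<epsilon> = min (\<rho>/2) (1/(\<beta> * \<omega> 0 + \<sigma>2 + 1))"
    have w0: "0 \<le> \<omega> 0" using omega_nonneg by simp
    have "0 < \<beta> * \<omega> 0 + \<sigma>2 + 1" using mult_nonneg_nonneg[of \<beta> "\<omega> 0"] w0 beta_pos sigma_pos by linarith
    hence epos: "0 < \<epsilon>" using r by (simp add: \<epsilon>_def)
    have ele: "\<epsilon> \<le> \<rho>" using r by (simp add: \<epsilon>_def)
    have "1/\<epsilon> \<ge> \<beta> * \<omega> 0 + \<sigma>2 + 1"
    proof -
      have "\<epsilon> \<le> 1/(\<beta> * \<omega> 0 + \<sigma>2 + 1)" by (simp add: \<epsilon>_def)
      moreover have "\<beta> * \<omega> 0 + \<sigma>2 + 1 > 0" using mult_nonneg_nonneg[of \<beta> "\<omega> 0"] w0 beta_pos sigma_pos by linarith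
      ultimately show ?thesis using epos by (simp add: field_simps)
    qed
    hence "(1/\<epsilon> - \<sigma>2) / \<beta> \<ge> (\<beta> * \<omega> 0 + 1) / \<beta>"
      using beta_pos by (intro divide_right_mono) auto
    hence "phi_inv \<beta> \<sigma>2 \<epsilon> \<ge> \<omega> 0 + 1/\<beta>"
      using beta_pos by (simp add: phi_inv_def add_divide_distrib)
    moreover have "\<omega> \<epsilon> \<le> \<omega> 0" using omega_mono epos by simp
    ultimately have ge: "g \<epsilon> \<le> 0" using beta_pos unfolding g_def by (smt (verit) divide_pos_pos zero_less_one)
    have "0 \<le> g \<rho>" using neg unfolding g_def by simp
    then obtain x where x: "\<epsilon> \<le> x" "x \<le> \<rho>" "g x = 0"
      using IVT'[of g \<epsilon> 0 \<rho>] ge ele gcont[OF epos] by auto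
    have "x = \<rho>s" using rho_unique[of x] x epos r2 rho_range unfolding g_def by auto
    thus False using x r2 by simp
  qed
  have B: "phi_inv \<beta> \<sigma>2 \<rho> \<le> \<omega> \<rho>" if r: "\<rho>s \<le> \<rho>" "\<rho> \<le> snr" for \<rho>
  proof (rule ccontr)
    assume neg: "\<not> ?thesis"
    hence "\<rho> \<noteq> \<rho>s" using rho_fix by auto
    hence r2: "\<rho>s < \<rho>" using r by auto
    have g1: "g \<rho> \<le> 0" using neg unfolding g_def by simp
    have g2: "0 \<le> g snr" using phisnr omega_nonneg snrpos unfolding g_def by simp
    have rp: "0 < \<rho>" using r2 rho_range by simp
    then obtain x where x: "\<rho> \<le> x" "x \<le> snr" "g x = 0"
      using IVT'[of g \<rho> 0 snr] g1 g2 r gcont[OF rp] by auto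
    have "x = \<rho>s" using rho_unique[of x] x rp unfolding g_def by auto
    thus False using x r2 by simp
  qed
  have I1: "(omega_C \<omega> \<beta> \<sigma>2 has_integral integral {0..\<rho>s} \<omega>) {0..\<rho>s}"
  proof (rule has_integral_spike_finite[of "{0}"])
    show "(\<omega> has_integral integral {0..\<rho>s} \<omega>) {0..\<rho>s}"
      by (rule integrable_integral, rule integrable_continuous_interval,
          rule continuous_on_subset[OF omega_cont]) auto
    fix x assume "x \<in> {0..\<rho>s} - {0}"
    thus "omega_C \<omega> \<beta> \<sigma>2 x = \<omega> x" using A[of x] by (auto simp: omega_C_def)
  qed auto
  define F where "F x = (ln x - \<sigma>2 * x) / \<beta>" for x
  have I2: "(omega_C \<omega> \<beta> \<sigma>2 has_integral (F snr - F \<rho>s)) {\<rho>s..snr}"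
  proof (rule has_integral_spike_finite[of "{}"])
    show "(phi_inv \<beta> \<sigma>2 has_integral (F snr - F \<rho>s)) {\<rho>s..snr}"
    proof (rule fundamental_theorem_of_calculus[OF rho_range(2)])
      fix x assume x: "x \<in> {\<rho>s..snr}"
      hence xp: "x > 0" using rho_range by auto
      show "(F has_vector_derivative phi_inv \<beta> \<sigma>2 x) (at x within {\<rho>s..snr})"
        unfolding F_def phi_inv_def has_real_derivative_iff_has_vector_derivative[symmetric]
        by (rule has_field_derivative_at_within)
           (use xp beta_pos in \<open>auto intro!: derivative_eq_intros\<close>)
    qed
    fix x assume "x \<in> {\<rho>s..snr} - {}"
    thus "omega_C \<omega> \<beta> \<sigma>2 x = phi_inv \<beta> \<sigma>2 x" using B[of x] by (auto simp: omega_C_def)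
  qed auto
  have I: "(omega_C \<omega> \<beta> \<sigma>2 has_integral (integral {0..\<rho>s} \<omega> + (F snr - F \<rho>s))) {0..snr}"
    by (rule has_integral_combine[OF _ rho_range(2) I1 I2]) (use rho_range in simp)
  have val: "F snr - F \<rho>s = (1 / \<beta>) * (\<rho>s / snr - ln (\<rho>s / snr) - 1)"
  proof -
    have "\<sigma>2 * snr = 1" using snr_def sigma_pos by simp
    moreover have "\<sigma>2 * \<rho>s = \<rho>s / snr" using snr_def sigma_pos by simp
    moreover have "ln (\<rho>s / snr) = ln \<rho>s - ln snr" using rho_range snrpos by (simp add: ln_div)
    ultimately show ?thesis unfolding F_def using beta_pos by (simp add: diff_divide_distrib add_divide_distrib)
  qed
  have z1: "1 + \<zeta>s = snr / \<rho>s" using zeta_def by simp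
  have eqs: "integral {0..snr} (omega_C \<omega> \<beta> \<sigma>2) = (1 / \<beta>) * (\<rho>s / snr - ln (\<rho>s / snr) - 1) + integral {0..\<rho>s} \<omega>"
    using integral_unique[OF I] val by simp
  have lhs: "(1 / \<beta>) * (ln (1 + \<zeta>s) - \<zeta>s / (1 + \<zeta>s)) + C_SISO \<omega> (snr / (1 + \<zeta>s))
      = (1 / \<beta>) * (\<rho>s / snr - ln (\<rho>s / snr) - 1) + integral {0..\<rho>s} \<omega>"
  proof -
    have a: "snr / (1 + \<zeta>s) = \<rho>s" using z1 rho_range snrpos by simp
    have b: "\<zeta>s / (1 + \<zeta>s) = 1 - \<rho>s / snr" unfolding z1 unfolding zeta_def using rho_range snrpos by (simp add: field_simps)
    have c: "ln (1 + \<zeta>s) = - ln (\<rho>s / snr)" using z1 rho_range snrpos by (simp add: ln_div)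
    show ?thesis unfolding a b c C_SISO_def by (simp add: algebra_simps)
  qed
  have "omega_C \<omega> \<beta> \<sigma>2 integrable_on {0..snr}" using I by (rule has_integral_integrable)
  thus ?thesis using eqs lhs by simp
qed

end
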